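(* Let $p(n,k)$ be the number of $\mathbf{3}$-free naturally labelled posets on $[n]$ with exactly $k$ minimal elements. Then $p(0,0)=1$, $p(n,0)=0$ for $n\ge1$, $p(n,k)=0$ for $n<k$, and for $n\ge1$, $k\ge1$: $$p(n,k)=p(n-1,k-1)+(2^k-1)\,p(n-1,k).$$ Consequently $p(n,k)=S_2[n,k]$, where the $q$-Stirling numbers of the second kind $S_q[n,k]$ satisfy $S_q[n,k]=S_q[n-1,k-1]+[k]_q\,S_q[n-1,k]$ with $[k]_q=1+q+\dots+q^{k-1}$ and the same initial conditions. Moreover, the bivariate generating function $F(z,y)=\sum_{n\ge k\ge 0}p(n,k)z^ny^k$ satisfies $$F(z,y)=1+z\big(F(z,2y)-(1-y)F(z,y)\big),$$ and $$F(z,y)=\sum_{k\ge0}\frac{z^ky^k}{\prod_{i=1}^k\big(1-(2^i-1)z\big)}.$$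
   Context: A partial order $\preceq$ on $[n]$ is naturally labelled if $x\prec y$ implies $x<y$. It is $\mathbf{3}$-free if there are no three elements $x\prec y\prec z$. *)

theory Defs
  imports Main "HOL-Computational_Algebra.Formal_Power_Series"
begin

definition naturally_labelled :: "nat rel \<Rightarrow> bool" where
  "naturally_labelled r \<longleftrightarrow> (\<forall>x y. (x, y) \<in> r \<and> x \<noteq> y \<longrightarrow> x < y)"

definition three_free :: "nat rel \<Rightarrow> bool" where
  "three_free r \<longleftrightarrow> \<not> (\<exists>x y z. (x, y) \<in> r \<and> x \<noteq> y \<and> (y, z) \<in> r \<and> y \<noteq> z)"

definition minimal_elements :: "nat \<Rightarrow> nat rel \<Rightarrow> nat set" where
  "minimal_elements n r = {x \<in> {1..n}. \<forall>y. (y, x) \<in> r \<longrightarrow> y = x}"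

definition p :: "nat \<Rightarrow> nat \<Rightarrow> nat" where
  "p n k = card {r. partial_order_on {1..n} r \<and> naturally_labelled r \<and> three_free r
                   \<and> card (minimal_elements n r) = k}"

definition qint :: "'a::comm_semiring_1 \<Rightarrow> nat \<Rightarrow> 'a" where
  "qint q k = (\<Sum>i<k. q ^ i)"

fun qStirling2 :: "'a::comm_semiring_1 \<Rightarrow> nat \<Rightarrow> nat \<Rightarrow> 'a" where
  "qStirling2 q 0 0 = 1"
| "qStirling2 q 0 (Suc k) = 0"
| "qStirling2 q (Suc n) 0 = 0"
| "qStirling2 q (Suc n) (Suc k) = qStirling2 q n k + qint q (Suc k) * qStirling2 q n (Suc k)"

text \<open>Bivariate generating function F(z,y) = sum p(n,k) z^n y^k, represented as a formal
  power series in y whose coefficients are formal power series in z (over the rationals).\<close>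
definition F :: "rat fps fps" where
  "F = Abs_fps (\<lambda>k. Abs_fps (\<lambda>n. of_nat (p n k)))"

definition subst_2y :: "rat fps fps \<Rightarrow> rat fps fps" where
  "subst_2y G = Abs_fps (\<lambda>k. fps_const (2 ^ k) * fps_nth G k)"

end

theory Submission
  imports Defs
begin

definition PS :: "nat \<Rightarrow> nat rel set" where
  "PS n = {r. partial_order_on {1..n} r \<and> naturally_labelled r \<and> three_free r}"

definition res :: "nat \<Rightarrow> nat rel \<Rightarrow> nat rel" where
  "res m r = r \<inter> ({1..m} \<times> {1..m})"
definition dn :: "nat \<Rightarrow> nat rel \<Rightarrow> nat set" where
  "dn m r = {x. (x, Suc m) \<in> r} - {Suc m}"
definition ext :: "nat \<Rightarrow> nat rel \<Rightarrow> nat set \<Rightarrow> nat rel" where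
  "ext m r D = r \<union> insert (Suc m, Suc m) (D \<times> {Suc m})"

lemma PS_sub: "r \<in> PS n \<Longrightarrow> r \<subseteq> {1..n} \<times> {1..n}"
  unfolding PS_def using partial_order_onD(4) by blast

lemma fin_PS: "finite (PS n)"
proof -
  have "PS n \<subseteq> Pow ({1..n} \<times> {1..n})" using PS_sub by blast
  then show ?thesis by (rule finite_subset) auto
qed

lemma p_eq: "p n k = card {r \<in> PS n. card (minimal_elements n r) = k}"
  unfolding p_def PS_def by (rule arg_cong[where f=card]) auto

lemma min_sub: "minimal_elements n r \<subseteq> {1..n}"
  unfolding minimal_elements_def by auto

lemma ext_PS:
  assumes r: "r \<in> PS m" and D: "D \<subseteq> minimal_elements m r"
  shows "ext m r D \<in> PS (Suc m)"
proof -
  have sub: "r \<subseteq> {1..m} \<times> {1..m}" using PS_sub[OF r] .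
  have po: "refl_on {1..m} r" "trans r" "antisym r" "naturally_labelled r" "three_free r"
    using r unfolding PS_def partial_order_on_def preorder_on_def by auto
  have Dm: "\<And>x y. x \<in> D \<Longrightarrow> (y, x) \<in> r \<Longrightarrow> y = x" and Dsub: "D \<subseteq> {1..m}"
    using D unfolding minimal_elements_def by auto
  let ?e = "ext m r D"
  have "?e \<subseteq> {1..Suc m} \<times> {1..Suc m}" using sub Dsub unfolding ext_def by auto
  moreover have "refl_on {1..Suc m} ?e" using po(1) unfolding ext_def refl_on_def
    by (auto simp: le_Suc_eq)
  moreover have "trans ?e"
  proof (rule transI)
    fix a b c assume ab: "(a, b) \<in> ?e" and bc: "(b, c) \<in> ?e"
    show "(a, c) \<in> ?e"
      using ab bc sub Dsub Dm po(2) unfolding ext_def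
      by (auto dest: transD)
  qed
  moreover have "antisym ?e"
    using po(3) sub Dsub unfolding ext_def antisym_def by fastforce
  moreover have "naturally_labelled ?e"
    using po(4) sub Dsub unfolding ext_def naturally_labelled_def by auto
  moreover have "three_free ?e"
    using po(5) sub Dsub Dm unfolding ext_def three_free_def by fastforce
  ultimately show ?thesis unfolding PS_def partial_order_on_def preorder_on_def by auto
qed

lemma res_ext:
  assumes r: "r \<in> PS m" and D: "D \<subseteq> minimal_elements m r"
  shows "res m (ext m r D) = r" "dn m (ext m r D) = D"
  using PS_sub[OF r] D min_sub[of m r] unfolding res_def dn_def ext_def by auto

lemma res_PS:
  assumes r: "r \<in> PS (Suc m)"
  shows "res m r \<in> PS m" "dn m r \<subseteq> minimal_elements m (res m r)"
    "ext m (res m r) (dn m r) = r"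
proof -
  have sub: "r \<subseteq> {1..Suc m} \<times> {1..Suc m}" using PS_sub[OF r] .
  have po: "refl_on {1..Suc m} r" "trans r" "antisym r" "naturally_labelled r" "three_free r"
    using r unfolding PS_def partial_order_on_def preorder_on_def by auto
  show "res m r \<in> PS m"
    using po unfolding PS_def partial_order_on_def preorder_on_def res_def refl_on_def
      naturally_labelled_def three_free_def antisym_def trans_def by auto blast
  show "dn m r \<subseteq> minimal_elements m (res m r)"
    using po(5) sub unfolding dn_def minimal_elements_def res_def three_free_def
    by (auto simp: le_Suc_eq)
  show "ext m (res m r) (dn m r) = r"
  proof
    show "ext m (res m r) (dn m r) \<subseteq> r"
      using po(1) unfolding ext_def res_def dn_def refl_on_def by auto
    show "r \<subseteq> ext m (res m r) (dn m r)"
    proof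
      fix x assume x: "x \<in> r"
      obtain a b where ab: "x = (a, b)" by force
      have "a \<le> b" using po(4) x ab unfolding naturally_labelled_def by force
      then show "x \<in> ext m (res m r) (dn m r)"
        using x ab sub unfolding ext_def res_def dn_def by (auto simp: le_Suc_eq)
    qed
  qed
qed

lemma min_ext:
  assumes r: "r \<in> PS m" and D: "D \<subseteq> minimal_elements m r"
  shows "minimal_elements (Suc m) (ext m r D) =
     (if D = {} then insert (Suc m) (minimal_elements m r) else minimal_elements m r)"
  using PS_sub[OF r] D min_sub[of m r] unfolding minimal_elements_def ext_def
  by (auto simp: le_Suc_eq)

lemma card_filter_sum: "finite A \<Longrightarrow> card {x\<in>A. P x} = (\<Sum>x\<in>A. if P x then 1 else 0)"
  by (simp add: sum.inter_filter[symmetric])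

lemma pow_sum:
  assumes "finite M"
  shows "(\<Sum>D\<in>Pow M. (if D = {} then a else b)) = a + (2 ^ card M - 1) * (b::nat)"
proof -
  have "(\<Sum>D\<in>Pow M. (if D = {} then a else b)) =
      a + (\<Sum>D\<in>Pow M - {{}}. (if D = {} then a else b))"
    using assms by (subst sum.remove[of _ "{}"]) auto
  also have "(\<Sum>D\<in>Pow M - {{}}. (if D = {} then a else b)) = (\<Sum>D\<in>Pow M - {{}}. b)"
    by (rule sum.cong) auto
  also have "\<dots> = (2 ^ card M - 1) * b"
    using assms by (simp add: card_Pow)
  finally show ?thesis .
qed

lemma p_rec: "p (Suc m) k = (if k \<ge> 1 then p m (k - 1) else 0) + (2 ^ k - 1) * p m k"
proof -
  let ?M = "minimal_elements m"
  let ?cm = "\<lambda>r. card (minimal_elements (Suc m) r)"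
  let ?S = "SIGMA r:PS m. Pow (?M r)"
  have fM: "\<And>r. finite (?M r)" using min_sub finite_subset by blast
  have bij: "bij_betw (\<lambda>(r, D). ext m r D) ?S (PS (Suc m))"
  proof (rule bij_betw_byWitness[where f'="\<lambda>r. (res m r, dn m r)"])
    show "\<forall>a\<in>?S. (res m (case a of (r, D) \<Rightarrow> ext m r D), dn m (case a of (r, D) \<Rightarrow> ext m r D)) = a"
      using res_ext by auto
    show "\<forall>a'\<in>PS (Suc m). (case (res m a', dn m a') of (r, D) \<Rightarrow> ext m r D) = a'"
      using res_PS by auto
    show "(\<lambda>(r, D). ext m r D) ` ?S \<subseteq> PS (Suc m)"
      using ext_PS by auto
    show "(\<lambda>r. (res m r, dn m r)) ` PS (Suc m) \<subseteq> ?S"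
      using res_PS by blast
  qed
  have "p (Suc m) k = (\<Sum>r\<in>PS (Suc m). if ?cm r = k then 1 else 0)"
    by (simp add: p_eq card_filter_sum fin_PS)
  also have "\<dots> = (\<Sum>x\<in>?S. if ?cm ((\<lambda>(r, D). ext m r D) x) = k then 1 else 0)"
    by (rule sum.reindex_bij_betw[OF bij, symmetric])
  also have "\<dots> = (\<Sum>r\<in>PS m. \<Sum>D\<in>Pow (?M r). if ?cm (ext m r D) = k then 1 else 0)"
    by (subst sum.Sigma) (auto simp: fin_PS fM split_def)
  also have "\<dots> = (\<Sum>r\<in>PS m. (if card (?M r) + 1 = k then (1::nat) else 0)
       + (if card (?M r) = k then (2::nat) ^ k - 1 else 0))"
  proof (rule sum.cong[OF refl])
    fix r assume r: "r \<in> PS m"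
    have "(\<Sum>D\<in>Pow (?M r). if ?cm (ext m r D) = k then 1 else 0) =
       (\<Sum>D\<in>Pow (?M r). if D = {} then (if card (?M r) + 1 = k then (1::nat) else 0)
          else (if card (?M r) = k then 1 else 0))"
    proof (rule sum.cong[OF refl])
      fix D assume D: "D \<in> Pow (?M r)"
      have "Suc m \<notin> ?M r" using min_sub[of m r] by auto
      then show "(if ?cm (ext m r D) = k then 1 else 0) = (if D = {} then (if card (?M r) + 1 = k then (1::nat) else 0)
          else (if card (?M r) = k then 1 else 0))"
        using min_ext[OF r] D fM by auto
    qed
    also have "\<dots> = (if card (?M r) + 1 = k then (1::nat) else 0) + (if card (?M r) = k then (2::nat) ^ k - 1 else 0)"
      by (subst pow_sum[OF fM]) auto
    finally show "(\<Sum>D\<in>Pow (?M r). if ?cm (ext m r D) = k then 1 else 0) =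
       (if card (?M r) + 1 = k then (1::nat) else 0) + (if card (?M r) = k then (2::nat) ^ k - 1 else 0)" .
  qed
  also have "\<dots> = (\<Sum>r\<in>PS m. if card (?M r) + 1 = k then (1::nat) else 0)
       + (2 ^ k - 1) * (\<Sum>r\<in>PS m. if card (?M r) = k then 1 else 0)"
    by (simp only: sum.distrib sum_distrib_left) (intro arg_cong2[where f="(+)"] refl sum.cong; simp)
  also have "(\<Sum>r\<in>PS m. if card (?M r) + 1 = k then (1::nat) else 0) = (if k \<ge> 1 then p m (k - 1) else 0)"
  proof (cases "k \<ge> 1")
    case True
    then have "(\<Sum>r\<in>PS m. if card (?M r) + 1 = k then (1::nat) else 0) = (\<Sum>r\<in>PS m. if card (?M r) = k - 1 then 1 else (0::nat))"
      by (intro sum.cong) auto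
    then show ?thesis using True by (simp add: p_eq card_filter_sum fin_PS)
  qed simp
  also have "(\<Sum>r\<in>PS m. if card (?M r) = k then 1 else 0) = p m k"
    by (simp add: p_eq card_filter_sum fin_PS)
  finally show ?thesis .
qed

lemma PS0: "PS 0 = {{}}"
  using PS_sub[of _ 0] unfolding PS_def
  by (auto simp: partial_order_on_def preorder_on_def refl_on_def trans_def antisym_def
      naturally_labelled_def three_free_def)

lemma p00: "p 0 0 = 1"
  by (simp add: p_eq PS0 minimal_elements_def)

lemma p_big: "n < k \<Longrightarrow> p n k = 0"
proof -
  assume nk: "n < k"
  have "\<And>r. card (minimal_elements n r) \<le> n"
    using card_mono[OF _ min_sub] by (metis card_atLeastAtMost diff_Suc_1 finite_atLeastAtMost)
  then have "{r \<in> PS n. card (minimal_elements n r) = k} = {}" using nk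
    by (metis (mono_tags, lifting) empty_Collect_eq leD)
  then show ?thesis unfolding p_eq by (metis card.empty)
qed

lemma qint2: "qint (2::nat) k = 2 ^ k - 1"
proof (induction k)
  case 0 then show ?case by (simp add: qint_def)
next
  case (Suc k)
  have "qint (2::nat) (Suc k) = qint 2 k + 2 ^ k" by (simp add: qint_def)
  also have "\<dots> = 2 ^ Suc k - 1" using Suc by (simp add: one_le_power)
  finally show ?case .
qed

lemma p_qS: "p n k = qStirling2 (2::nat) n k"
proof (induction n arbitrary: k)
  case 0 then show ?case by (cases k) (auto simp: p00 p_big)
next
  case (Suc n)
  then show ?case by (cases k) (auto simp: p_rec qint2)
qed

lemma p_rec_rat: "(of_nat (p (Suc m) k) :: rat) =
   (if k \<ge> 1 then of_nat (p m (k - 1)) else 0) + (2 ^ k - 1) * of_nat (p m k)"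
  by (simp add: p_rec of_nat_diff one_le_power)

definition Fk :: "nat \<Rightarrow> rat fps" where
  "Fk k = Abs_fps (\<lambda>n. of_nat (p n k))"

lemma F_nth: "fps_nth F k = Fk k" by (simp add: F_def Fk_def)

lemma outer_nth: "fps_nth (1 + fps_const fps_X * (subst_2y F - (1 - fps_X) * F)) k =
   (if k = 0 then 1 else 0) + fps_X * (fps_const (2 ^ k) * Fk k - Fk k + (if k = 0 then 0 else Fk (k - 1)))"
  by (simp add: ring_distribs fps_X_mult_nth subst_2y_def F_nth fps_mult_left_const_nth)

lemma eq1: "F = 1 + fps_const fps_X * (subst_2y F - (1 - fps_X) * F)"
proof (rule fps_ext)
  fix k
  show "fps_nth F k = fps_nth (1 + fps_const fps_X * (subst_2y F - (1 - fps_X) * F)) k"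
    unfolding outer_nth
  proof (rule fps_ext)
    fix n
    show "fps_nth (fps_nth F k) n = fps_nth ((if k = 0 then 1 else 0) + fps_X * (fps_const (2 ^ k) * Fk k - Fk k + (if k = 0 then 0 else Fk (k - 1)))) n"
      by (cases n; cases k) (auto simp: F_nth Fk_def fps_X_mult_nth fps_mult_left_const_nth
          p00 p_big p_rec_rat algebra_simps)
  qed
qed

lemma Fk0: "Fk 0 = 1"
proof (rule fps_ext)
  fix n show "fps_nth (Fk 0) n = fps_nth 1 n"
    by (cases n) (auto simp: Fk_def p00 p_rec)
qed

lemma Fk_Suc: "Fk (Suc k) = fps_X * Fk k + fps_const (2 ^ Suc k - 1) * (fps_X * Fk (Suc k))"
proof (rule fps_ext)
  fix n show "fps_nth (Fk (Suc k)) n = fps_nth (fps_X * Fk k + fps_const (2 ^ Suc k - 1) * (fps_X * Fk (Suc k))) n"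
    by (cases n) (auto simp: Fk_def p_big fps_X_mult_nth fps_mult_left_const_nth p_rec_rat
        simp del: power_Suc)
qed

definition PP :: "nat \<Rightarrow> rat fps" where
  "PP k = (\<Prod>i=1..k. 1 - fps_const (2 ^ i - 1) * fps_X)"

lemma Fk_PP: "Fk k * PP k = fps_X ^ k"
proof (induction k)
  case 0 then show ?case by (simp add: Fk0 PP_def)
next
  case (Suc k)
  have eq: "PP (Suc k) = PP k * (1 - fps_const (2 ^ Suc k - 1) * fps_X)"
    by (simp add: PP_def prod.cl_ivl_Suc del: power_Suc)
  have "Fk (Suc k) * PP (Suc k) = (Fk (Suc k) * (1 - fps_const (2 ^ Suc k - 1) * fps_X)) * PP k"
    unfolding eq by (simp only: mult_ac)
  also have "Fk (Suc k) * (1 - fps_const (2 ^ Suc k - 1) * fps_X) = fps_X * Fk k"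
    using Fk_Suc[of k] by (simp add: algebra_simps del: power_Suc)
  finally show ?case using Suc by (simp add: algebra_simps)
qed

lemma PP_nz: "PP k \<noteq> 0"
proof -
  have "\<And>i. (1 - fps_const (2 ^ i - 1) * fps_X :: rat fps) \<noteq> 0"
  proof
    fix i assume "(1 - fps_const (2 ^ i - 1) * fps_X :: rat fps) = 0"
    then have "fps_nth (1 - fps_const (2 ^ i - 1) * fps_X :: rat fps) 0 = 0" by simp
    then show False by simp
  qed
  then show ?thesis unfolding PP_def by (simp add: prod_zero_iff)
qed

lemma eq2: "F = Abs_fps (\<lambda>k. fps_X ^ k / (\<Prod>i=1..k. 1 - fps_const (2 ^ i - 1) * fps_X))"
proof (rule fps_ext)
  fix k
  have "Fk k = fps_X ^ k / PP k" by (metis Fk_PP fps_divide_times_eq PP_nz)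
  then show "fps_nth F k = fps_nth (Abs_fps (\<lambda>k. fps_X ^ k / (\<Prod>i=1..k. 1 - fps_const (2 ^ i - 1) * fps_X))) k"
    by (simp add: F_nth Fk_PP PP_def)
qed

theorem proposition4:
  shows "p 0 0 = 1
    \<and> (\<forall>n\<ge>1. p n 0 = 0)
    \<and> (\<forall>n k. n < k \<longrightarrow> p n k = 0)
    \<and> (\<forall>n\<ge>1. \<forall>k\<ge>1. p n k = p (n - 1) (k - 1) + (2 ^ k - 1) * p (n - 1) k)
    \<and> (\<forall>n k. p n k = qStirling2 (2::nat) n k)
    \<and> F = 1 + fps_const fps_X * (subst_2y F - (1 - fps_X) * F)
    \<and> F = Abs_fps (\<lambda>k. fps_X ^ k / (\<Prod>i=1..k. 1 - fps_const (2 ^ i - 1) * fps_X))"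
proof (intro conjI allI impI)
  show "p 0 0 = 1" by (rule p00)
  show "p n 0 = 0" if "n \<ge> 1" for n
    using that by (cases n) (auto simp: p_rec)
  show "p n k = 0" if "n < k" for n k using that by (rule p_big)
  show "p n k = p (n - 1) (k - 1) + (2 ^ k - 1) * p (n - 1) k" if "n \<ge> 1" "k \<ge> 1" for n k
    using that by (cases n) (auto simp: p_rec)
  show "p n k = qStirling2 (2::nat) n k" for n k by (rule p_qS)
  show "F = 1 + fps_const fps_X * (subst_2y F - (1 - fps_X) * F)" by (rule eq1)
  show "F = Abs_fps (\<lambda>k. fps_X ^ k / (\<Prod>i=1..k. 1 - fps_const (2 ^ i - 1) * fps_X))" by (rule eq2)
qed

end
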